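(* A topological group $G$ is metrizable if and only if $G$ is a Fréchet–Urysohn $\aleph$-space.
   Context: A $k$-network in $X$ is a family $\mathcal N$ of subsets such that whenever $K\subset U$ with $K$ compact and $U$ open, there is a finite $\mathcal F\subset\mathcal N$ with $K\subset\bigcup\mathcal F\subset U$; an $\aleph$-space is a regular space with a $\sigma$-locally finite $k$-network. *)

theory Defs
  imports "HOL-Analysis.Analysis"
begin

definition locally_finite_family :: "'a topology \<Rightarrow> 'a set set \<Rightarrow> bool" where
  "locally_finite_family X \<F> \<longleftrightarrow>
     (\<forall>x\<in>topspace X. \<exists>U. openin X U \<and> x \<in> U \<and> finite {A\<in>\<F>. A \<inter> U \<noteq> {}})"

definition sigma_locally_finite :: "'a topology \<Rightarrow> 'a set set \<Rightarrow> bool" where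
  "sigma_locally_finite X \<N> \<longleftrightarrow>
     (\<exists>\<F> :: nat \<Rightarrow> 'a set set. \<N> = (\<Union>n. \<F> n) \<and> (\<forall>n. locally_finite_family X (\<F> n)))"

definition k_network :: "'a topology \<Rightarrow> 'a set set \<Rightarrow> bool" where
  "k_network X \<N> \<longleftrightarrow>
     (\<forall>N\<in>\<N>. N \<subseteq> topspace X) \<and>
     (\<forall>K U. compactin X K \<and> openin X U \<and> K \<subseteq> U \<longrightarrow>
        (\<exists>\<F>. finite \<F> \<and> \<F> \<subseteq> \<N> \<and> K \<subseteq> \<Union>\<F> \<and> \<Union>\<F> \<subseteq> U))"

text \<open>Regular in the classical sense (T_3, i.e. including T_1).\<close>
definition aleph_space :: "'a topology \<Rightarrow> bool" where
  "aleph_space X \<longleftrightarrow> regular_space X \<and> t1_space X \<and>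
     (\<exists>\<N>. k_network X \<N> \<and> sigma_locally_finite X \<N>)"

definition Frechet_Urysohn_space :: "'a topology \<Rightarrow> bool" where
  "Frechet_Urysohn_space X \<longleftrightarrow>
     (\<forall>A x. A \<subseteq> topspace X \<and> x \<in> X closure_of A \<longrightarrow>
        (\<exists>s. (\<forall>n. s n \<in> A) \<and> limitin X s x sequentially))"

end

theory Submission
  imports Defs
begin

lemma finite_if_all_equal:
  assumes H: "\<And>A B. A \<in> S \<Longrightarrow> B \<in> S \<Longrightarrow> A = B" shows "finite S"
proof (cases "S = {}")
  case False
  then obtain A where A: "A \<in> S" by blast
  have "S \<subseteq> {A}" using H A by blast
  then show ?thesis using finite_subset by blast
qed simp

context Metric_space
begin

lemma sigma_lf_k_network: "\<exists>\<N>. k_network mtopology \<N> \<and> sigma_locally_finite mtopology \<N>"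
proof -
  obtain r :: "'a rel" where wo: "Well_order r" and univ: "Field r = UNIV"
    using well_ordering by (elim exE conjE)
  define R where "R = r - Id"
  have wfR: "wf R" using wo unfolding R_def by (simp add: well_order_on_def)
  have totr: "total_on UNIV r" using wo univ by (simp add: well_order_on_def linear_order_on_def)
  have tot: "s = t \<or> (s,t) \<in> R \<or> (t,s) \<in> R" for s t
    using totr unfolding R_def total_on_def by auto
  define \<rho> :: "nat \<Rightarrow> real" where "\<rho> m = (1/2)^m" for m
  define E where "E m n s = {x \<in> M. x \<in> mball s (\<rho> m) \<and> (\<forall>t. (t,s) \<in> R \<longrightarrow> x \<notin> mball t (\<rho> m))
       \<and> mball x (3*\<rho> n) \<subseteq> mball s (\<rho> m)}" for m n s
  define D where "D m n s = (\<Union>x\<in>E m n s. mball x (\<rho> n))" for m n s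
  define Fam where "Fam k = (\<lambda>s. D (fst (prod_decode k)) (snd (prod_decode k)) s) ` M" for k
  define \<N> where "\<N> = (\<Union>k. Fam k)"
  have rpos: "\<rho> m > 0" for m by (simp add: \<rho>_def)
  have Dopen: "openin mtopology (D m n s)" for m n s
    unfolding D_def by (rule openin_Union) auto
  have Dsub: "D m n s \<subseteq> mball s (\<rho> m)" for m n s
  proof
    fix y assume "y \<in> D m n s"
    then obtain x where x: "x \<in> E m n s" "y \<in> mball x (\<rho> n)" unfolding D_def by (rule UN_E)
    have "\<rho> n \<le> 3 * \<rho> n" using rpos[of n] by simp
    then have sub: "mball x (\<rho> n) \<subseteq> mball x (3*\<rho> n)" by (rule mball_subset_concentric)
    have y3: "y \<in> mball x (3*\<rho> n)" using sub x(2) by (rule subsetD)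
    have sub2: "mball x (3*\<rho> n) \<subseteq> mball s (\<rho> m)" using x(1) unfolding E_def by simp
    show "y \<in> mball s (\<rho> m)" using sub2 y3 by (rule subsetD)
  qed
  have cover: "\<exists>n. \<exists>s\<in>M. x \<in> D m n s" if "x \<in> M" for x m
  proof -
    define Q where "Q = {s \<in> M. x \<in> mball s (\<rho> m)}"
    have xQ: "x \<in> Q" unfolding Q_def using that rpos by simp
    obtain s where s: "s \<in> Q" and smin: "\<And>t. (t,s) \<in> R \<Longrightarrow> t \<notin> Q"
      using wfE_min[OF wfR xQ] by blast
    have "openin mtopology (mball s (\<rho> m))" by simp
    then have op: "\<forall>y. y \<in> mball s (\<rho> m) \<longrightarrow> (\<exists>r>0. mball y r \<subseteq> mball s (\<rho> m))"
      unfolding openin_mtopology by (rule conjunct2)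
    have xs: "x \<in> mball s (\<rho> m)" using s by (simp add: Q_def)
    obtain e where "e > 0" and e: "mball x e \<subseteq> mball s (\<rho> m)"
      using op[rule_format, OF xs] by (elim exE conjE)
    obtain n where n: "(1/2::real)^n < e/3"
      using real_arch_pow_inv[of "e/3" "1/2"] \<open>e>0\<close> by auto
    have "mball x (3*\<rho> n) \<subseteq> mball s (\<rho> m)"
    proof -
      have "3*\<rho> n \<le> e" using n by (simp add: \<rho>_def)
      then have "mball x (3*\<rho> n) \<subseteq> mball x e" by (rule mball_subset_concentric)
      then show ?thesis using e by (rule subset_trans)
    qed
    moreover have "\<forall>t. (t,s) \<in> R \<longrightarrow> x \<notin> mball t (\<rho> m)"
      using smin unfolding Q_def by auto
    ultimately have "x \<in> E m n s" using xs that unfolding E_def by simp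
    moreover have "x \<in> mball x (\<rho> n)" using that rpos by simp
    ultimately have "x \<in> D m n s" unfolding D_def by (rule UN_I)
    moreover have "s \<in> M" using s unfolding Q_def by simp
    ultimately show ?thesis by blast
  qed
  have sep: "D m n s = D m n t" if H: "z \<in> M" "a \<in> D m n s" "a \<in> mball z (\<rho> n / 2)"
      "b \<in> D m n t" "b \<in> mball z (\<rho> n / 2)" for m n s t z a b
  proof -
    obtain x where x: "x \<in> E m n s" "a \<in> mball x (\<rho> n)" using H(2) unfolding D_def by (rule UN_E)
    obtain y where y: "y \<in> E m n t" "b \<in> mball y (\<rho> n)" using H(4) unfolding D_def by (rule UN_E)
    have xE: "x \<in> M" "\<forall>u. (u,s) \<in> R \<longrightarrow> x \<notin> mball u (\<rho> m)" "mball x (3*\<rho> n) \<subseteq> mball s (\<rho> m)"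
      using x(1) unfolding E_def by simp_all
    have yE: "y \<in> M" "\<forall>u. (u,t) \<in> R \<longrightarrow> y \<notin> mball u (\<rho> m)" "mball y (3*\<rho> n) \<subseteq> mball t (\<rho> m)"
      using y(1) unfolding E_def by simp_all
    have aM: "a \<in> M" "z \<in> M" "b \<in> M" "d x a < \<rho> n" "d a z < \<rho> n / 2" "d z b < \<rho> n / 2" "d b y < \<rho> n"
      using x(2) y(2) H(1,3,5) by (simp_all add: commute)
    have "d x y \<le> d x a + d a y" using triangle xE(1) yE(1) aM(1) by simp
    moreover have "d a y \<le> d a z + d z y" using triangle yE(1) aM(1,2) by simp
    moreover have "d z y \<le> d z b + d b y" using triangle yE(1) aM(2,3) by simp
    ultimately have dxy: "d x y < 3 * \<rho> n" using aM(4-7) by linarith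
    have "s = t"
    proof (rule ccontr)
      assume "s \<noteq> t"
      then have "(s,t) \<in> R \<or> (t,s) \<in> R" using tot[of s t] by simp
      then show False
      proof
        assume "(s,t) \<in> R"
        then have "y \<notin> mball s (\<rho> m)" using yE(2) by simp
        moreover have "y \<in> mball x (3*\<rho> n)" using dxy xE(1) yE(1) by simp
        then have "y \<in> mball s (\<rho> m)" using xE(3) by (rule subsetD[rotated])
        ultimately show False by contradiction
      next
        assume "(t,s) \<in> R"
        then have "x \<notin> mball t (\<rho> m)" using xE(2) by simp
        moreover have "x \<in> mball y (3*\<rho> n)" using dxy xE(1) yE(1) by (simp add: commute)
        then have "x \<in> mball t (\<rho> m)" using yE(3) by (rule subsetD[rotated])
        ultimately show False by contradiction
      qed
    qed
    then show ?thesis by simp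
  qed
  have lf: "locally_finite_family mtopology (Fam k)" for k
    unfolding locally_finite_family_def
  proof
    fix z assume z: "z \<in> topspace mtopology"
    obtain m n where mn: "prod_decode k = (m,n)" by (cases "prod_decode k")
    have zM: "z \<in> M" using z by simp
    have fin: "finite {A \<in> Fam k. A \<inter> mball z (\<rho> n / 2) \<noteq> {}}"
    proof (rule finite_if_all_equal)
      fix A B assume A: "A \<in> {A \<in> Fam k. A \<inter> mball z (\<rho> n / 2) \<noteq> {}}"
         and B: "B \<in> {A \<in> Fam k. A \<inter> mball z (\<rho> n / 2) \<noteq> {}}"
      from A obtain s where As: "A = D m n s" unfolding Fam_def mn by auto
      from B obtain t where Bt: "B = D m n t" unfolding Fam_def mn by auto
      from A have "A \<inter> mball z (\<rho> n / 2) \<noteq> {}" by simp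
      then obtain a where "a \<in> A \<inter> mball z (\<rho> n / 2)" using ex_in_conv by blast
      then have a: "a \<in> A" "a \<in> mball z (\<rho> n / 2)" by (rule IntD1, rule IntD2)
      from B have "B \<inter> mball z (\<rho> n / 2) \<noteq> {}" by simp
      then obtain b where "b \<in> B \<inter> mball z (\<rho> n / 2)" using ex_in_conv by blast
      then have b: "b \<in> B" "b \<in> mball z (\<rho> n / 2)" by (rule IntD1, rule IntD2)
      show "A = B" using sep[OF zM, of a m n s b t] a b As Bt by simp
    qed
    have "openin mtopology (mball z (\<rho> n / 2))" by simp
    moreover have "z \<in> mball z (\<rho> n / 2)" using zM rpos[of n] by simp
    ultimately show "\<exists>U. openin mtopology U \<and> z \<in> U \<and> finite {A \<in> Fam k. A \<inter> U \<noteq> {}}"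
      using fin by blast
  qed
  have NFam: "D m n s \<in> \<N>" if "s \<in> M" for m n s
  proof -
    have "D m n s \<in> Fam (prod_encode (m,n))" unfolding Fam_def using that by simp
    then show ?thesis unfolding \<N>_def by (rule UN_I[rotated]) simp
  qed
  have Nform: "\<exists>m n s. N = D m n s" if "N \<in> \<N>" for N
    using that unfolding \<N>_def Fam_def by auto
  have "k_network mtopology \<N>"
    unfolding k_network_def
  proof (intro conjI allI impI ballI)
    fix N assume "N \<in> \<N>"
    then obtain m n s where "N = D m n s" using Nform by blast
    moreover have "D m n s \<subseteq> M" using Dsub[of m n s] mball_subset_mspace[of s "\<rho> m"] by (rule subset_trans)
    ultimately show "N \<subseteq> topspace mtopology" by simp
  next
    fix K U assume KU: "compactin mtopology K \<and> openin mtopology U \<and> K \<subseteq> U"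
    have Uopen: "\<forall>x. x \<in> U \<longrightarrow> (\<exists>r>0. mball x r \<subseteq> U)" using KU unfolding openin_mtopology by simp
    have KM: "K \<subseteq> M" using KU compactin_subset_topspace by force
    define \<U> where "\<U> = {A \<in> \<N>. A \<subseteq> U}"
    have "\<forall>A\<in>\<U>. openin mtopology A"
    proof
      fix A assume "A \<in> \<U>"
      then have "A \<in> \<N>" unfolding \<U>_def by simp
      then obtain m n s where "A = D m n s" using Nform by blast
      then show "openin mtopology A" using Dopen by simp
    qed
    moreover have "K \<subseteq> \<Union>\<U>"
    proof
      fix x assume "x \<in> K"
      then have xU: "x \<in> U" and xM: "x \<in> M" using KU KM by auto
      obtain e where "e > 0" and e: "mball x e \<subseteq> U" using Uopen xU by blast
      obtain m where m: "(1/2::real)^m < e/2"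
        using real_arch_pow_inv[of "e/2" "1/2"] \<open>e>0\<close> by auto
      obtain n s where s: "s \<in> M" "x \<in> D m n s" using cover[OF xM] by blast
      have "D m n s \<subseteq> U"
      proof
        fix y assume "y \<in> D m n s"
        then have y1: "y \<in> mball s (\<rho> m)" using Dsub by (rule subsetD[rotated])
        have x1: "x \<in> mball s (\<rho> m)" using s(2) Dsub by (rule subsetD[rotated])
        have "d x y \<le> d x s + d s y" using triangle xM s(1) y1 by simp
        moreover have "d x s < \<rho> m" "d s y < \<rho> m" using x1 y1 by (simp_all add: commute)
        ultimately have "d x y < e" using m unfolding \<rho>_def by linarith
        then have "y \<in> mball x e" using xM y1 by simp
        then show "y \<in> U" using e by (rule subsetD[rotated])
      qed
      moreover have "D m n s \<in> \<N>" using NFam s(1) by simp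
      ultimately have "D m n s \<in> \<U>" unfolding \<U>_def by simp
      then show "x \<in> \<Union>\<U>" using s(2) by (rule UnionI)
    qed
    ultimately obtain \<F> where F: "finite \<F>" "\<F> \<subseteq> \<U>" "K \<subseteq> \<Union>\<F>"
      using KU unfolding compactin_def by (elim conjE) (drule spec[of _ \<U>], simp, elim exE conjE, simp)
    have "\<F> \<subseteq> \<N>" "\<Union>\<F> \<subseteq> U" using F(2) unfolding \<U>_def by auto
    then show "\<exists>\<F>. finite \<F> \<and> \<F> \<subseteq> \<N> \<and> K \<subseteq> \<Union>\<F> \<and> \<Union>\<F> \<subseteq> U"
      using F by blast
  qed
  moreover have "sigma_locally_finite mtopology \<N>"
    unfolding sigma_locally_finite_def \<N>_def using lf by blast
  ultimately show ?thesis by blast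
qed

end

lemma grp_open_translation:
  fixes S :: "'a::topological_group_add set"
  assumes "open S" shows "open ((\<lambda>x. a + x) ` S)"
proof -
  have c: "continuous_on UNIV (\<lambda>x. -a + x)"
    by (intro continuous_intros)
  have "(\<lambda>x. a + x) ` S = (\<lambda>x. -a + x) -` S"
  proof (intro set_eqI iffI)
    fix x assume "x \<in> (\<lambda>x. -a + x) -` S"
    then show "x \<in> (\<lambda>x. a + x) ` S"
      by (intro image_eqI[where x="-a + x"]) (auto simp: add.assoc[symmetric])
  qed (auto simp: add.assoc[symmetric])
  moreover have "open ((\<lambda>x. -a + x) -` S)"
    using continuous_on_open_vimage[OF open_UNIV, THEN iffD1, OF c, rule_format, OF assms] by simp
  ultimately show ?thesis by simp
qed

lemma grp_open_neg:
  fixes S :: "'a::topological_group_add set"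
  assumes "open S" shows "open (uminus ` S)"
proof -
  have c: "continuous_on UNIV (uminus :: 'a \<Rightarrow> 'a)"
    using continuous_on_minus[OF continuous_on_id] by (simp add: id_def)
  have "uminus ` S = uminus -` S"
  proof (intro set_eqI iffI)
    fix x assume "x \<in> uminus -` S"
    then show "x \<in> uminus ` S"
      by (intro image_eqI[where x="-x"]) auto
  qed auto
  moreover have "open (uminus -` S)"
    using continuous_on_open_vimage[OF open_UNIV, THEN iffD1, OF c, rule_format, OF assms] by simp
  ultimately show ?thesis by simp
qed

lemma grp_add_nbhd:
  fixes W :: "'a::topological_group_add set"
  assumes "open W" "0 \<in> W"
  shows "\<exists>V. open V \<and> 0 \<in> V \<and> (\<forall>a\<in>V. \<forall>b\<in>V. a + b \<in> W)"
proof -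
  have "filterlim (\<lambda>x. fst x + snd x) (nhds (0 + 0)) (nhds (0::'a) \<times>\<^sub>F nhds 0)"
    by (rule tendsto_add_Pair)
  then have "eventually (\<lambda>x. fst x + snd x \<in> W) (nhds (0::'a) \<times>\<^sub>F nhds 0)"
    using assms by (simp add: topological_tendstoD)
  then obtain P Q where P: "eventually P (nhds 0)" and Q: "eventually Q (nhds 0)"
    and PQ: "\<And>x y. P x \<Longrightarrow> Q y \<Longrightarrow> x + y \<in> W"
    unfolding eventually_prod_filter by force
  obtain A where A: "open A" "0 \<in> A" "\<forall>x\<in>A. P x" using P unfolding eventually_nhds by blast
  obtain B where B: "open B" "0 \<in> B" "\<forall>x\<in>B. Q x" using Q unfolding eventually_nhds by blast
  show ?thesis using A B PQ by (intro exI[of _ "A \<inter> B"]) auto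
qed

lemma grp_three_nbhd:
  fixes U :: "'a::topological_group_add set"
  assumes "open U" "0 \<in> U"
  shows "\<exists>W. open W \<and> 0 \<in> W \<and> (\<forall>x\<in>W. -x \<in> W) \<and> (\<forall>a\<in>W. \<forall>b\<in>W. \<forall>c\<in>W. a + b + c \<in> U)"
proof -
  obtain V1 where V1: "open V1" "0 \<in> V1" "\<forall>a\<in>V1. \<forall>b\<in>V1. a + b \<in> U"
    using grp_add_nbhd[OF assms] by (elim exE conjE)
  obtain V2 where V2: "open V2" "0 \<in> V2" "\<forall>a\<in>V2. \<forall>b\<in>V2. a + b \<in> V1"
    using grp_add_nbhd[OF V1(1,2)] by (elim exE conjE)
  have sub: "V2 \<subseteq> V1"
  proof
    fix x assume "x \<in> V2" then have "x + 0 \<in> V1" using V2 by blast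
    then show "x \<in> V1" by simp
  qed
  define W where "W = V2 \<inter> uminus ` V2"
  have "open W" unfolding W_def using V2 grp_open_neg by blast
  moreover have "0 \<in> W" unfolding W_def using V2 by (auto simp: image_iff intro!: bexI[of _ 0])
  moreover have "\<forall>x\<in>W. -x \<in> W" unfolding W_def by (auto simp: image_iff)
  moreover have "\<forall>a\<in>W. \<forall>b\<in>W. \<forall>c\<in>W. a + b + c \<in> U"
  proof (intro ballI)
    fix a b c assume "a \<in> W" "b \<in> W" "c \<in> W"
    then have "a \<in> V2" "b \<in> V2" "c \<in> V2" unfolding W_def by auto
    then have "a + b \<in> V1" "c \<in> V1" using V2(3) sub by auto
    then show "a + b + c \<in> U" using V1(3) by blast
  qed
  ultimately show ?thesis by blast
qed

locale BKV =
  fixes V :: "nat \<Rightarrow> 'a::topological_group_add set"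
  assumes Vopen: "\<And>n. open (V n)"
    and V0: "V 0 = UNIV"
    and Vzero: "\<And>n. 0 \<in> V n"
    and Vsym: "\<And>n x. x \<in> V n \<Longrightarrow> -x \<in> V n"
    and Vthree: "\<And>n a b c. a \<in> V (Suc n) \<Longrightarrow> b \<in> V (Suc n) \<Longrightarrow> c \<in> V (Suc n) \<Longrightarrow> a + b + c \<in> V n"
    and Vinter: "\<And>x. (\<forall>n. x \<in> V n) \<Longrightarrow> x = 0"
    and Vbase: "\<And>U. open U \<Longrightarrow> 0 \<in> U \<Longrightarrow> \<exists>n. V n \<subseteq> U"
begin

lemma Vsuc: "x \<in> V (Suc n) \<Longrightarrow> x \<in> V n"
  using Vthree[of x n 0 0] Vzero by simp

lemma Vmono': "m \<le> n \<Longrightarrow> x \<in> V n \<Longrightarrow> x \<in> V m"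
proof (induction n arbitrary: m)
  case 0 then show ?case by simp
next
  case (Suc n) then show ?case using Vsuc le_Suc_eq by blast
qed

definition p :: "'a \<Rightarrow> real" where
  "p z = (if \<forall>n. z \<in> V n then 0 else 2 * (1/2)^(LEAST n. z \<notin> V n))"

lemma p_nonneg: "0 \<le> p z" by (simp add: p_def)

lemma pa: assumes "z \<in> V n" shows "p z \<le> (1/2)^n"
proof (cases "\<forall>n. z \<in> V n")
  case False
  then have ex: "\<exists>k. z \<notin> V k" by blast
  define N where "N = (LEAST n. z \<notin> V n)"
  have "z \<notin> V N" unfolding N_def using LeastI_ex[OF ex] .
  then have "n < N" using assms Vmono' by (meson not_le)
  then have "(1/2::real)^N \<le> (1/2)^(Suc n)" by (intro power_decreasing) auto
  then show ?thesis using False by (simp add: p_def N_def[symmetric])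
qed (simp add: p_def)

lemma pb: assumes "p z < (1/2)^n" shows "z \<in> V (Suc n)"
proof (cases "\<forall>n. z \<in> V n")
  case False
  define N where "N = (LEAST n. z \<notin> V n)"
  have "p z = 2 * (1/2)^N" using False by (simp add: p_def N_def)
  then have "2 * (1/2::real)^N < (1/2)^n" using assms by simp
  then have "(1/2::real)^N < (1/2)^(Suc n)" by simp
  then have "Suc n < N" using power_strict_decreasing_iff[of "1/2::real" N "Suc n"] by simp
  then show ?thesis using not_less_Least[of "Suc n" "\<lambda>n. z \<notin> V n"] unfolding N_def by blast
qed simp

lemma p_le1: "p z \<le> 1" using pa[of z 0] V0 by simp

lemma p0: "p 0 = 0" using Vzero by (simp add: p_def)

lemma p_neg: "p (-z) = p z"
proof -
  have "(-z \<in> V n) = (z \<in> V n)" for n using Vsym by force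
  then show ?thesis by (simp add: p_def)
qed

lemma p_zero_iff: "p z = 0 \<Longrightarrow> z = 0"
proof -
  assume "p z = 0"
  then have "z \<in> V (Suc n)" for n by (intro pb) simp
  then have "\<forall>n. z \<in> V n" using Vsuc by blast
  then show "z = 0" by (rule Vinter)
qed

lemma key: "p (sum_list zs) \<le> 2 * sum_list (map p zs)"
proof (induction "length zs" arbitrary: zs rule: less_induct)
  case less
  define a where "a = sum_list (map p zs)"
  have a0: "0 \<le> a" unfolding a_def by (induction zs) (auto simp: p_nonneg)
  show ?case
  proof (cases "a = 0")
    case True
    then have "\<forall>x\<in>set (map p zs). x = 0"
      using sum_list_nonneg_eq_0_iff[of "map p zs"] p_nonneg unfolding a_def by auto
    then have "\<forall>z\<in>set zs. z = 0" using p_zero_iff by auto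
    then have "sum_list zs = 0" by (induction zs) auto
    then show ?thesis using p0 a0 a_def by simp
  next
    case False
    then have apos: "a > 0" using a0 by simp
    show ?thesis
    proof (cases "a \<ge> 1/2")
      case True then show ?thesis using p_le1[of "sum_list zs"] a_def by simp
    next
      case False
      obtain k where k: "(1/2::real)^k < a" using real_arch_pow_inv[OF apos, of "1/2"] by auto
      have ex: "\<exists>n. (1/2::real)^(Suc n) \<le> a"
        proof
        have "(1/2::real)^k \<le> a*2" using k apos by linarith
        then show "(1/2::real)^(Suc k) \<le> a" by (simp add: power_Suc2)
      qed
      define n where "n = (LEAST n. (1/2::real)^(Suc n) \<le> a)"
      have n1: "(1/2::real)^(Suc n) \<le> a" unfolding n_def by (rule LeastI_ex[OF ex])
      have n2: "a < (1/2)^n"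
      proof (cases n)
        case 0 then show ?thesis using False by simp
      next
        case (Suc j)
        have "j < (LEAST n. (1/2::real)^(Suc n) \<le> a)" using Suc n_def by simp
        then have "\<not> (\<lambda>n. (1/2::real)^(Suc n) \<le> a) j" by (rule not_less_Least)
        then have "a < (1/2::real)^(Suc j)" by linarith
        then show ?thesis using Suc by simp
      qed
      define L where "L = length zs"
      define S where "S j = sum_list (map p (take j zs))" for j
      have Sex: "0 \<le> L \<and> S 0 \<le> a/2" using a0 by (simp add: S_def)
      define m where "m = (GREATEST j. j \<le> L \<and> S j \<le> a/2)"
      have bound: "\<forall>y. y \<le> L \<and> S y \<le> a/2 \<longrightarrow> y \<le> L" by blast
      have m1: "m \<le> L \<and> S m \<le> a/2"
        unfolding m_def by (rule GreatestI_nat[of _ 0 L]) (use Sex in auto)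
      have SL: "S L = a" unfolding S_def L_def a_def by simp
      have mL: "m < L"
      proof (rule ccontr)
        assume "\<not> m < L" then have "m = L" using m1 by simp
        then show False using m1 SL apos by simp
      qed
      have m2: "\<not> S (Suc m) \<le> a/2"
      proof
        assume "S (Suc m) \<le> a/2"
        then have P1: "Suc m \<le> L \<and> S (Suc m) \<le> a/2" using mL by simp
        have "Suc m \<le> (GREATEST j. j \<le> L \<and> S j \<le> a/2)"
          by (rule Greatest_le_nat[of "\<lambda>j. j \<le> L \<and> S j \<le> a/2" "Suc m" L, OF P1]) simp
        then show False using m_def by simp
      qed
      define A where "A = take m zs"
      define z where "z = zs ! m"
      define B where "B = drop (Suc m) zs"
      have zsplit: "zs = A @ z # B" unfolding A_def z_def B_def
        using id_take_nth_drop mL L_def by blast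
      have Bnn: "0 \<le> sum_list (map p B)" by (induction B) (auto simp: p_nonneg)
      have Ann: "0 \<le> sum_list (map p A)" by (induction A) (auto simp: p_nonneg)
      have asum: "a = sum_list (map p A) + p z + sum_list (map p B)"
        unfolding a_def by (subst zsplit) simp
      have SA: "S m = sum_list (map p A)" unfolding S_def A_def ..
      have SSm: "S (Suc m) = sum_list (map p A) + p z"
        unfolding S_def A_def z_def using mL L_def by (simp add: take_Suc_conv_app_nth)
      have "length A < length zs" unfolding A_def using mL L_def by simp
      then have IA: "p (sum_list A) \<le> 2 * sum_list (map p A)" using less by blast
      have "length B < length zs" unfolding B_def using mL L_def by simp
      then have IB: "p (sum_list B) \<le> 2 * sum_list (map p B)" using less by blast
      have "p (sum_list A) < (1/2)^n" using IA SA m1 n2 by linarith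
      then have 1: "sum_list A \<in> V (Suc n)" by (rule pb)
      have "p z < (1/2)^n" using asum Ann Bnn n2 by linarith
      then have 2: "z \<in> V (Suc n)" by (rule pb)
      have "p (sum_list B) < (1/2)^n" using IB asum SSm m2 n2 by linarith
      then have 3: "sum_list B \<in> V (Suc n)" by (rule pb)
      have "sum_list zs = sum_list A + z + sum_list B"
        by (subst zsplit) (simp add: add.assoc)
      then have "sum_list zs \<in> V n" using Vthree[OF 1 2 3] by simp
      then have "p (sum_list zs) \<le> (1/2)^n" by (rule pa)
      also have "\<dots> \<le> 2 * a" using n1 by simp
      finally show ?thesis unfolding a_def .
    qed
  qed
qed

definition dd :: "'a \<Rightarrow> 'a \<Rightarrow> real" where
  "dd x y = Inf {sum_list (map p zs) | zs. x + sum_list zs = y}"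

lemma chain_nonneg: "0 \<le> sum_list (map p zs)"
  by (induction zs) (auto simp: p_nonneg)

lemma chains_ne: "{sum_list (map p zs) | zs. x + sum_list zs = y} \<noteq> {}"
proof -
  have "x + sum_list [-x + y] = y" by (simp add: add.assoc[symmetric])
  then show ?thesis by blast
qed

lemma chains_bdd: "bdd_below {sum_list (map p zs) | zs. x + sum_list zs = y}"
  by (rule bdd_belowI[of _ 0]) (auto simp: chain_nonneg)

lemma dd_le_chain: "x + sum_list zs = y \<Longrightarrow> dd x y \<le> sum_list (map p zs)"
  unfolding dd_def by (rule cInf_lower[OF _ chains_bdd]) blast

lemma dd_le_p: "dd x y \<le> p (-x + y)"
proof -
  have "x + sum_list [-x + y] = y" by (simp add: add.assoc[symmetric])
  from dd_le_chain[OF this] show ?thesis by simp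
qed

lemma dd_nonneg: "0 \<le> dd x y"
  unfolding dd_def by (rule cInf_greatest[OF chains_ne]) (auto simp: chain_nonneg)

lemma dd_ge_p: "p (-x + y) \<le> 2 * dd x y"
proof -
  have "p (-x + y) / 2 \<le> dd x y"
    unfolding dd_def
  proof (rule cInf_greatest[OF chains_ne])
    fix r assume "r \<in> {sum_list (map p zs) | zs. x + sum_list zs = y}"
    then obtain zs where zs: "r = sum_list (map p zs)" "x + sum_list zs = y" by blast
    then have "-x + y = sum_list zs" by (auto simp: add.assoc[symmetric])
    then show "p (-x + y) / 2 \<le> r" using key[of zs] zs by simp
  qed
  then show ?thesis by simp
qed

lemma minus_sum_list: "- sum_list (zs::'a list) = sum_list (rev (map uminus zs))"
  by (induction zs) (auto simp: minus_add)

lemma p_rev_chain: "sum_list (map p (rev (map uminus zs))) = sum_list (map p zs)"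
  by (induction zs) (simp_all add: p_neg)

lemma dd_sym_le: "dd y x \<le> dd x y"
  unfolding dd_def[of x y]
proof (rule cInf_greatest[OF chains_ne])
  fix r assume "r \<in> {sum_list (map p zs) | zs. x + sum_list zs = y}"
  then obtain zs where zs: "r = sum_list (map p zs)" "x + sum_list zs = y" by blast
  have "y + - sum_list zs = x" using zs(2)[symmetric] by (simp add: add.assoc)
  then have "y + sum_list (rev (map uminus zs)) = x"
    by (simp only: minus_sum_list)
  from dd_le_chain[OF this] show "dd y x \<le> r" using zs p_rev_chain by simp
qed

lemma dd_sym: "dd x y = dd y x"
  using dd_sym_le by (meson antisym)

lemma dd_tri: "dd x z \<le> dd x y + dd y z"
proof -
  have step: "dd x z - sum_list (map p ws) \<le> dd x y" if ws: "y + sum_list ws = z" for ws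
    unfolding dd_def[of x y]
  proof (rule cInf_greatest[OF chains_ne])
    fix r assume "r \<in> {sum_list (map p zs) | zs. x + sum_list zs = y}"
    then obtain zs where zs: "r = sum_list (map p zs)" "x + sum_list zs = y" by blast
    then have "x + sum_list (zs @ ws) = z" using ws by (simp add: add.assoc[symmetric])
    from dd_le_chain[OF this] show "dd x z - sum_list (map p ws) \<le> r" using zs by simp
  qed
  then have "dd x z - dd x y \<le> dd y z"
    unfolding dd_def[of y z]
  proof (intro cInf_greatest[OF chains_ne])
    fix r assume "r \<in> {sum_list (map p zs) | zs. y + sum_list zs = z}"
    then obtain ws where ws: "r = sum_list (map p ws)" "y + sum_list ws = z" by blast
    have "dd x z - sum_list (map p ws) \<le> dd x y" using step ws(2) by blast
    then show "dd x z - dd x y \<le> r" using ws(1) by linarith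
  qed
  then show ?thesis by simp
qed

lemma dd_zero: "dd x y = 0 \<longleftrightarrow> x = y"
proof
  assume "dd x y = 0"
  then have "p (-x + y) = 0" using dd_ge_p[of x y] p_nonneg[of "-x+y"] by simp
  then have "-x + y = 0" by (rule p_zero_iff)
  then show "x = y" by (metis add_minus_cancel add.right_neutral)
next
  assume "x = y"
  then show "dd x y = 0" using dd_le_p[of x y] dd_nonneg[of x y] p0 by simp
qed

lemma dd_metric: "Metric_space UNIV dd"
proof
  show "0 \<le> dd x y" for x y by (rule dd_nonneg)
  show "dd x y = dd y x" for x y by (rule dd_sym)
  show "dd x y = 0 \<longleftrightarrow> x = y" for x y by (rule dd_zero)
  show "dd x z \<le> dd x y + dd y z" for x y z by (rule dd_tri)
qed

lemma metrizable: "metrizable_space (euclidean :: 'a topology)"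
proof -
  interpret MS: Metric_space UNIV dd by (rule dd_metric)
  have "openin MS.mtopology U \<longleftrightarrow> open U" for U
  proof
    assume U: "open U"
    show "openin MS.mtopology U"
      unfolding MS.openin_mtopology
    proof (intro conjI allI impI)
      show "U \<subseteq> UNIV" by (rule subset_UNIV)
    next
      fix x assume "x \<in> U"
      have o1: "open ((\<lambda>z. -x + z) ` U)" using U by (rule grp_open_translation)
      have o2: "0 \<in> (\<lambda>z. -x + z) ` U"
        using \<open>x \<in> U\<close> by (intro image_eqI[where x=x]) simp_all
      obtain n where n: "V n \<subseteq> (\<lambda>z. -x + z) ` U" using Vbase[OF o1 o2] by (elim exE)
      have "MS.mball x ((1/2)^(Suc n)) \<subseteq> U"
        proof
          fix y assume "y \<in> MS.mball x ((1/2)^(Suc n))"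
          then have "dd x y < (1/2)^(Suc n)" by simp
          then have "p (-x + y) < (1/2)^n" using dd_ge_p[of x y] by (simp add: power_Suc)
          then have "-x + y \<in> V (Suc n)" by (rule pb)
          then have "-x + y \<in> V n" by (rule Vsuc)
          then have "-x + y \<in> (\<lambda>z. -x + z) ` U" using n by (rule subsetD[rotated])
          then obtain u where u: "u \<in> U" "-x + y = -x + u" by (elim imageE)
          from u(2) have "y = u" by simp
          then show "y \<in> U" using u(1) by simp
        qed
      moreover have "(0::real) < (1/2)^(Suc n)" by simp
      ultimately show "\<exists>r>0. MS.mball x r \<subseteq> U" by (intro exI[of _ "(1/2::real)^(Suc n)"] conjI)
    qed
  next
    assume U: "openin MS.mtopology U"
    show "open U"
    proof (rule open_subopen[THEN iffD2], intro ballI)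
      fix x assume "x \<in> U"
      then obtain r where "r > 0" and r: "MS.mball x r \<subseteq> U"
        using U unfolding MS.openin_mtopology by blast
      obtain n where n: "(1/2::real)^n < r" using real_arch_pow_inv[OF \<open>r>0\<close>, of "1/2"] by auto
      show "\<exists>T. open T \<and> x \<in> T \<and> T \<subseteq> U"
      proof (intro exI conjI)
        show "open ((\<lambda>z. x + z) ` V n)" by (rule grp_open_translation[OF Vopen])
        show "x \<in> (\<lambda>z. x + z) ` V n" using Vzero[of n] by (intro image_eqI[where x=0]) simp_all
        show "(\<lambda>z. x + z) ` V n \<subseteq> U"
        proof
          fix w assume "w \<in> (\<lambda>z. x + z) ` V n"
          then obtain v where v: "v \<in> V n" "w = x + v" by (elim imageE) simp
          then have "dd x w \<le> p v" using dd_le_p[of x w] by (simp add: add.assoc[symmetric])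
          also have "\<dots> \<le> (1/2)^n" using pa v by blast
          finally have "w \<in> MS.mball x r" using n by simp
          then show "w \<in> U" using r by blast
        qed
      qed
    qed
  qed
  then have "(euclidean :: 'a topology) = MS.mtopology"
    by (simp add: topology_eq)
  then show ?thesis unfolding metrizable_space_def using dd_metric by blast
qed

end

lemma base_to_metrizable:
  fixes B :: "nat \<Rightarrow> 'a::topological_group_add set"
  assumes t1: "t1_space (euclidean::'a topology)"
    and Bo: "\<And>k. open (B k)" "\<And>k. 0 \<in> B k"
    and Bb: "\<And>U. open U \<Longrightarrow> 0 \<in> U \<Longrightarrow> \<exists>k. B k \<subseteq> U"
  shows "metrizable_space (euclidean::'a topology)"
proof -
  define P where "P U W \<longleftrightarrow> open W \<and> 0 \<in> W \<and> (\<forall>x\<in>W. -x \<in> W) \<and>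
     (\<forall>a\<in>W. \<forall>b\<in>W. \<forall>c\<in>W. a + b + c \<in> U)" for U W :: "'a set"
  define V where "V = rec_nat UNIV (\<lambda>n Vn. SOME W. P (Vn \<inter> B n) W)"
  have V0: "V 0 = UNIV" by (simp add: V_def)
  have VS: "V (Suc n) = (SOME W. P (V n \<inter> B n) W)" for n by (simp add: V_def)
  have step: "P (V n \<inter> B n) (V (Suc n))" if "open (V n)" "0 \<in> V n" for n
  proof -
    have "open (V n \<inter> B n)" "0 \<in> V n \<inter> B n" using that Bo by auto
    then have "\<exists>W. P (V n \<inter> B n) W" unfolding P_def by (rule grp_three_nbhd)
    then show ?thesis unfolding VS by (rule someI_ex)
  qed
  have ob: "open (V n) \<and> 0 \<in> V n" for n
  proof (induction n)
    case 0 then show ?case using V0 by simp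
  next
    case (Suc n)
    then have "P (V n \<inter> B n) (V (Suc n))" using step by blast
    then show ?case unfolding P_def by blast
  qed
  have obz: "0 \<in> V n" for n using ob by blast
  have PS: "P (V n \<inter> B n) (V (Suc n))" for n using step ob by blast
  have Vthree: "a + b + c \<in> V n \<inter> B n" if "a \<in> V (Suc n)" "b \<in> V (Suc n)" "c \<in> V (Suc n)" for n a b c
    using PS[of n] that unfolding P_def by blast
  interpret BKV V
  proof
    show "open (V n)" for n using ob by blast
    show "V 0 = UNIV" by (rule V0)
    show "0 \<in> V n" for n using ob by blast
    show "-x \<in> V n" if "x \<in> V n" for n x
    proof (cases n)
      case 0 then show ?thesis using V0 by simp
    next
      case (Suc k) then show ?thesis using PS[of k] that unfolding P_def by blast
    qed
    show "a + b + c \<in> V n" if "a \<in> V (Suc n)" "b \<in> V (Suc n)" "c \<in> V (Suc n)" for n a b c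
      using Vthree[OF that] by blast
    show "x = 0" if "\<forall>n. x \<in> V n" for x
    proof (rule ccontr)
      assume "x \<noteq> 0"
      have "closedin euclidean {x}" using t1 unfolding t1_space_closedin_singleton by simp
      then have "open (- {x})" by (simp add: closed_closedin[symmetric] open_Compl)
      moreover have "0 \<in> - {x}" using \<open>x \<noteq> 0\<close> by simp
      ultimately have "\<exists>k. B k \<subseteq> - {x}" by (rule Bb)
      then obtain k where k: "B k \<subseteq> - {x}" by (elim exE)
      have "x + 0 + 0 \<in> V k \<inter> B k" by (rule Vthree[OF that[rule_format] obz obz])
      then have "x \<in> B k" by simp
      then have "x \<in> - {x}" using k by (rule subsetD[rotated])
      then show False by simp
    qed
    show "\<exists>n. V n \<subseteq> U" if UU: "open U" "0 \<in> U" for U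
    proof -
      obtain k where k: "B k \<subseteq> U" using Bb[OF UU] by (elim exE)
      have "V (Suc k) \<subseteq> U"
      proof
        fix x assume "x \<in> V (Suc k)"
        then have "x + 0 + 0 \<in> V k \<inter> B k" by (rule Vthree[OF _ obz obz])
        then have "x \<in> B k" by simp
        then show "x \<in> U" using k by (rule subsetD[rotated])
      qed
      then show ?thesis by (rule exI)
    qed
  qed
  show ?thesis by (rule metrizable)
qed

lemma aleph_FU_base:
  assumes FU: "Frechet_Urysohn_space (euclidean::'a::topological_group_add topology)"
    and AL: "aleph_space (euclidean::'a topology)"
  shows "\<exists>B::nat \<Rightarrow> 'a set. (\<forall>k. open (B k) \<and> 0 \<in> B k) \<and> (\<forall>U. open U \<and> 0 \<in> U \<longrightarrow> (\<exists>k. B k \<subseteq> U))"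
proof -
  have fu: "\<exists>s. (\<forall>n. s n \<in> A) \<and> s \<longlonglongrightarrow> x" if "x \<in> closure A" for A and x :: 'a
    using FU that unfolding Frechet_Urysohn_space_def by simp
  have t1: "t1_space (euclidean::'a topology)" and reg: "regular_space (euclidean::'a topology)"
    using AL unfolding aleph_space_def by simp_all
  have haus: "Hausdorff_space (euclidean::'a topology)"
    using reg t1 by (rule regular_t1_imp_Hausdorff_space)
  have csing: "closed {x::'a}" for x
  proof -
    have "closedin euclidean {x}" using t1 unfolding t1_space_closedin_singleton by simp
    then show ?thesis by (simp only: closed_closedin)
  qed
  obtain \<N> :: "'a set set" where kn: "k_network euclidean \<N>" and slf: "sigma_locally_finite euclidean \<N>"
    using AL unfolding aleph_space_def by blast
  obtain F :: "nat \<Rightarrow> 'a set set" where NF: "\<N> = (\<Union>n. F n)" and lfF: "\<And>n. locally_finite_family euclidean (F n)"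
    using slf unfolding sigma_locally_finite_def by blast
  show ?thesis
  proof (cases "open {0::'a}")
    case True
    show ?thesis
      by (rule exI[of _ "\<lambda>k. {0}"]) (use True in auto)
  next
    case False
    have "0 \<in> closure (- {0::'a})"
      unfolding closure_iff_nhds_not_empty
    proof (intro allI impI)
      fix T S :: "'a set" assume "S \<subseteq> T" "open S" "0 \<in> S"
      show "- {0} \<inter> T \<noteq> {}"
      proof
        assume "- {0} \<inter> T = {}"
        then have "S = {0}" using \<open>S \<subseteq> T\<close> \<open>0 \<in> S\<close> by blast
        then show False using False \<open>open S\<close> by simp
      qed
    qed
    then obtain y where y: "\<And>n. y n \<in> - {0::'a}" and ylim: "y \<longlonglongrightarrow> 0"
      using fu by blast
    define C where "C = {N \<in> \<N>. (0::'a) \<in> closure N}"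
    have finC: "finite {N \<in> F n. (0::'a) \<in> closure N}" for n
    proof -
      obtain W where W: "open W" "0 \<in> W" "finite {A \<in> F n. A \<inter> W \<noteq> {}}"
        using lfF[of n] unfolding locally_finite_family_def by auto
      have "{N \<in> F n. (0::'a) \<in> closure N} \<subseteq> {A \<in> F n. A \<inter> W \<noteq> {}}"
      proof
        fix N assume N: "N \<in> {N \<in> F n. (0::'a) \<in> closure N}"
        then have "W \<inter> closure N \<noteq> {}" using W(2) by blast
        then have "W \<inter> N \<noteq> {}" using open_Int_closure_eq_empty[OF W(1)] by blast
        then show "N \<in> {A \<in> F n. A \<inter> W \<noteq> {}}" using N by blast
      qed
      then show ?thesis using W(3) by (rule finite_subset)
    qed
    have "C = (\<Union>n. {N \<in> F n. (0::'a) \<in> closure N})" unfolding C_def NF by blast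
    then have cC: "countable C" using finC by (simp add: countable_finite)
    define C' where "C' = insert {} C"
    have cC': "countable C'" "C' \<noteq> {}" using cC unfolding C'_def by simp_all
    define f where "f = from_nat_into C'"
    have rf: "range f = C'" unfolding f_def using cC' by simp
    have claim: "\<exists>n. (0::'a) \<in> interior (insert 0 (\<Union>(f ` {i. i \<le> n \<and> f i \<subseteq> U})))"
      if U: "open U" "(0::'a) \<in> U" for U
    proof (rule ccontr)
      define D where "D n = insert (0::'a) (\<Union>(f ` {i. i \<le> n \<and> f i \<subseteq> U}))" for n
      assume "\<not> ?thesis"
      then have nD: "(0::'a) \<notin> interior (D n)" for n unfolding D_def by blast
      have "\<exists>\<sigma>. (\<forall>m. \<sigma> m \<in> - D n - {- y n}) \<and> \<sigma> \<longlonglongrightarrow> 0" for n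
      proof -
        have c1: "0 \<in> closure (- D n)" using nD[of n] by (simp add: closure_complement)
        have "0 \<in> closure (- D n - {- y n})"
          unfolding closure_iff_nhds_not_empty
        proof (intro allI impI)
          fix T S :: "'a set" assume ST: "S \<subseteq> T" "open S" "0 \<in> S"
          have "open (S - {- y n})" using ST(2) csing by (rule open_Diff)
          moreover have "0 \<in> S - {- y n}" using ST(3) y[of n] by simp
          ultimately have "- D n \<inter> (S - {- y n}) \<noteq> {}"
            using c1 unfolding closure_iff_nhds_not_empty by blast
          then show "(- D n - {- y n}) \<inter> T \<noteq> {}" using ST(1) by blast
        qed
        then show ?thesis using fu by blast
      qed
      then obtain s where s: "\<And>n m. s n m \<in> - D n - {- y n}" and slim: "\<And>n. s n \<longlonglongrightarrow> 0"
        by metis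
      define A where "A = {y n + s n m | n m. True}"
      have "0 \<in> closure A"
        unfolding closure_iff_nhds_not_empty
      proof (intro allI impI)
        fix T S :: "'a set" assume ST: "S \<subseteq> T" "open S" "0 \<in> S"
        obtain W where W: "open W" "0 \<in> W" "\<And>a b. a \<in> W \<Longrightarrow> b \<in> W \<Longrightarrow> a + b \<in> S"
          using grp_add_nbhd[OF ST(2,3)] by blast
        have "eventually (\<lambda>n. y n \<in> W) sequentially" using ylim W(1,2) by (rule topological_tendstoD)
        then obtain n where yn: "y n \<in> W" by (metis eventually_sequentially order_refl)
        have "eventually (\<lambda>m. s n m \<in> W) sequentially" using slim W(1,2) by (rule topological_tendstoD)
        then obtain m where sm: "s n m \<in> W" by (metis eventually_sequentially order_refl)
        have "y n + s n m \<in> A" unfolding A_def by blast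
        moreover have "y n + s n m \<in> T" using W(3)[OF yn sm] ST(1) by blast
        ultimately show "A \<inter> T \<noteq> {}" by blast
      qed
      then obtain z where zA: "\<And>j. z j \<in> A" and zlim: "z \<longlonglongrightarrow> 0" using fu by blast
      have "\<forall>j. \<exists>p. z j = y (fst p) + s (fst p) (snd p)"
        using zA unfolding A_def by fastforce
      then obtain g where g: "\<And>j. z j = y (fst (g j)) + s (fst (g j)) (snd (g j))" by metis
      define nj where "nj j = fst (g j)" for j
      define mj where "mj j = snd (g j)" for j
      have zj: "z j = y (nj j) + s (nj j) (mj j)" for j using g unfolding nj_def mj_def .
      have nz: "y n + s n m \<noteq> 0" for n m
      proof
        assume "y n + s n m = 0"
        then have "- y n = s n m" by (simp only: neg_eq_iff_add_eq_0)
        then show False using s[of n m] by simp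
      qed
      have njlim: "filterlim nj at_top sequentially"
        unfolding filterlim_at_top
      proof
        fix N
        define CN where "CN = (\<Union>n\<in>{..<N}. insert (y n) (range (\<lambda>m. y n + s n m)))"
        have "compactin euclidean (insert (y n) (range (\<lambda>m. y n + s n m)))" for n
        proof (rule compactin_sequence_with_limit)
          have "(\<lambda>m. y n + s n m) \<longlonglongrightarrow> y n + 0" by (intro tendsto_intros slim)
          then show "limitin euclidean (\<lambda>m. y n + s n m) (y n) sequentially" by simp
        qed auto
        then have "compactin euclidean CN" unfolding CN_def
          by (intro compactin_Union) auto
        then have "closedin euclidean CN" using haus by (intro compactin_imp_closedin)
        then have oC: "open (- CN)" by (simp add: closed_closedin[symmetric] open_Compl)
        have "0 \<notin> CN" unfolding CN_def using y nz by auto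
        then have "eventually (\<lambda>j. z j \<in> - CN) sequentially"
          using zlim oC by (intro topological_tendstoD) auto
        then show "eventually (\<lambda>j. N \<le> nj j) sequentially"
        proof (rule eventually_mono)
          fix j assume "z j \<in> - CN"
          show "N \<le> nj j"
          proof (rule ccontr)
            assume "\<not> N \<le> nj j"
            then have "nj j \<in> {..<N}" by simp
            moreover have "z j \<in> insert (y (nj j)) (range (\<lambda>m. y (nj j) + s (nj j) m))"
              unfolding zj by (rule insertI2) (rule rangeI)
            ultimately have "z j \<in> CN" unfolding CN_def by (rule UN_I)
            then show False using \<open>z j \<in> - CN\<close> by simp
          qed
        qed
      qed
      define t where "t j = s (nj j) (mj j)" for j
      have tz: "t j = - y (nj j) + z j" for j unfolding t_def zj by (simp add: add.assoc[symmetric])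
      have "(\<lambda>j. y (nj j)) \<longlonglongrightarrow> 0" using filterlim_compose[OF ylim njlim] .
      then have "(\<lambda>j. - y (nj j) + z j) \<longlonglongrightarrow> - 0 + 0" by (intro tendsto_intros zlim)
      then have tlim: "t \<longlonglongrightarrow> 0" unfolding tz[abs_def] by simp
      have tD: "t j \<notin> D (nj j)" for j unfolding t_def using s by simp
      have "eventually (\<lambda>j. t j \<in> U) sequentially" using tlim U by (rule topological_tendstoD)
      then obtain J where J: "\<And>j. j \<ge> J \<Longrightarrow> t j \<in> U" unfolding eventually_sequentially by blast
      define K where "K = insert 0 (range (\<lambda>j. t (j + J)))"
      have tJlim: "(\<lambda>j. t (j + J)) \<longlonglongrightarrow> 0" using tlim by (rule LIMSEQ_ignore_initial_segment)
      have "compactin euclidean K" unfolding K_def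
        by (rule compactin_sequence_with_limit) (use tJlim in auto)
      moreover have "K \<subseteq> U" unfolding K_def using J U(2) by auto
      ultimately obtain \<F> where F: "finite \<F>" "\<F> \<subseteq> \<N>" "K \<subseteq> \<Union>\<F>" "\<Union>\<F> \<subseteq> U"
        using kn U(1) unfolding k_network_def by (meson open_openin)
      have "\<exists>N\<in>\<F>. infinite {j. t (j + J) \<in> N}"
      proof (rule ccontr)
        assume "\<not> ?thesis"
        then have "finite (\<Union>N\<in>\<F>. {j. t (j + J) \<in> N})" using F(1) by auto
        moreover have "(\<Union>N\<in>\<F>. {j. t (j + J) \<in> N}) = UNIV" using F(3) unfolding K_def by blast
        ultimately show False by simp
      qed
      then obtain N where N: "N \<in> \<F>" "infinite {j. t (j + J) \<in> N}" by blast
      have freq: "frequently (\<lambda>j. t (j + J) \<in> N) sequentially"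
        using N(2) by (simp add: frequently_cofinite[symmetric] cofinite_eq_sequentially)
      have "0 \<in> closure N"
        unfolding closure_iff_nhds_not_empty
      proof (intro allI impI)
        fix T S :: "'a set" assume ST: "S \<subseteq> T" "open S" "0 \<in> S"
        have "eventually (\<lambda>j. t (j + J) \<in> S) sequentially" using tJlim ST(2,3) by (rule topological_tendstoD)
        then have "eventually (\<lambda>j. t (j + J) \<in> N \<longrightarrow> t (j + J) \<in> N \<and> t (j + J) \<in> S) sequentially"
          by (rule eventually_mono) simp
        then have "frequently (\<lambda>j. t (j + J) \<in> N \<and> t (j + J) \<in> S) sequentially"
          using freq by (rule frequently_mp)
        then obtain j where "t (j + J) \<in> N" "t (j + J) \<in> S" by (auto dest: frequently_ex)
        then show "N \<inter> T \<noteq> {}" using ST(1) by blast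
      qed
      then have "N \<in> C" unfolding C_def using N(1) F(2) by blast
      then have "N \<in> range f" unfolding rf C'_def by blast
      then obtain k where k: "N = f k" by blast
      have NU: "N \<subseteq> U" using N(1) F(4) by blast
      have "eventually (\<lambda>j. k \<le> nj j) sequentially" using njlim unfolding filterlim_at_top by blast
      then have ev: "eventually (\<lambda>j. k \<le> nj (j + J)) sequentially"
        unfolding eventually_sequentially by (metis le_add1 order_trans)
      have "eventually (\<lambda>j. t (j + J) \<in> N \<longrightarrow> t (j + J) \<in> N \<and> k \<le> nj (j + J)) sequentially"
        using ev by (rule eventually_mono) simp
      then have "frequently (\<lambda>j. t (j + J) \<in> N \<and> k \<le> nj (j + J)) sequentially"
        using freq by (rule frequently_mp)
      then obtain j where j: "t (j + J) \<in> N" "k \<le> nj (j + J)" by (auto dest: frequently_ex)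
      have "N \<subseteq> D (nj (j + J))" unfolding D_def k using j(2) NU k by blast
      then show False using j(1) tD by blast
    qed
    define \<B> where "\<B> = {W. \<exists>I. finite I \<and> W = interior (insert (0::'a) (\<Union>(f ` I))) \<and> 0 \<in> W}"
    have "\<B> \<subseteq> (\<lambda>I. interior (insert (0::'a) (\<Union>(f ` I)))) ` {I::nat set. finite I}"
      unfolding \<B>_def by blast
    moreover have "countable ((\<lambda>I. interior (insert (0::'a) (\<Union>(f ` I)))) ` {I::nat set. finite I})"
      using countable_Collect_finite by blast
    ultimately have cB: "countable \<B>" by (rule countable_subset)
    have Bbase: "\<exists>W\<in>\<B>. W \<subseteq> U" if UU: "open U" "0 \<in> U" for U
    proof -
      obtain n where n: "(0::'a) \<in> interior (insert 0 (\<Union>(f ` {i. i \<le> n \<and> f i \<subseteq> U})))"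
        using claim[OF UU] by blast
      have "interior (insert 0 (\<Union>(f ` {i. i \<le> n \<and> f i \<subseteq> U}))) \<in> \<B>"
        unfolding \<B>_def using n by (intro CollectI exI[of _ "{i. i \<le> n \<and> f i \<subseteq> U}"]) auto
      moreover have "interior (insert 0 (\<Union>(f ` {i. i \<le> n \<and> f i \<subseteq> U}))) \<subseteq> U"
        using interior_subset UU(2) by blast
      ultimately show ?thesis by blast
    qed
    have Bne: "\<B> \<noteq> {}" using Bbase[of UNIV] by blast
    define B where "B = from_nat_into \<B>"
    have rB: "range B = \<B>" unfolding B_def using cB Bne by simp
    have Bk: "open (B k) \<and> 0 \<in> B k" for k
    proof -
      have "B k \<in> \<B>" using rB by blast
      then show ?thesis unfolding \<B>_def by auto
    qed
    have Bu: "\<exists>k. B k \<subseteq> U" if UU: "open U \<and> 0 \<in> U" for U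
    proof -
      have "\<exists>W\<in>\<B>. W \<subseteq> U" using UU by (intro Bbase) simp_all
      then obtain W where W: "W \<in> \<B>" "W \<subseteq> U" by blast
      then have "W \<in> range B" using rB by simp
      then obtain k where "W = B k" by blast
      then show ?thesis using W(2) by blast
    qed
    show ?thesis using Bk Bu by blast
  qed
qed


lemma metrizable_FU_aleph:
  assumes "metrizable_space X"
  shows "Frechet_Urysohn_space X \<and> aleph_space X"
proof -
  obtain M d where Md: "Metric_space M d" and X: "X = Metric_space.mtopology M d"
    using assms unfolding metrizable_space_def by blast
  interpret Metric_space M d by (rule Md)
  have "Frechet_Urysohn_space X"
    unfolding Frechet_Urysohn_space_def
  proof (intro allI impI)
    fix A x assume H: "A \<subseteq> topspace X \<and> x \<in> X closure_of A"
    then have "x \<in> mtopology closure_of A" using X by simp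
    then obtain \<sigma> where "range \<sigma> \<subseteq> A \<inter> M" "limitin mtopology \<sigma> x sequentially"
      unfolding closure_of_sequentially by blast
    then show "\<exists>s. (\<forall>n. s n \<in> A) \<and> limitin X s x sequentially" using X by blast
  qed
  moreover have "aleph_space X"
    unfolding aleph_space_def
    using metrizable_imp_regular_space[OF assms] metrizable_imp_t1_space[OF assms]
      sigma_lf_k_network X by blast
  ultimately show ?thesis by blast
qed

theorem corollary2p3:
  shows "metrizable_space (euclidean :: 'a::topological_group_add topology) \<longleftrightarrow>
         Frechet_Urysohn_space (euclidean :: 'a topology) \<and> aleph_space (euclidean :: 'a topology)"
proof
  assume "metrizable_space (euclidean :: 'a::topological_group_add topology)"
  then show "Frechet_Urysohn_space (euclidean :: 'a topology) \<and> aleph_space (euclidean :: 'a topology)"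
    by (rule metrizable_FU_aleph)
next
  assume H: "Frechet_Urysohn_space (euclidean :: 'a topology) \<and> aleph_space (euclidean :: 'a topology)"
  then obtain B :: "nat \<Rightarrow> 'a set" where B: "\<forall>k. open (B k) \<and> 0 \<in> B k"
    "\<forall>U. open U \<and> 0 \<in> U \<longrightarrow> (\<exists>k. B k \<subseteq> U)"
    using aleph_FU_base by blast
  have t1: "t1_space (euclidean :: 'a topology)" using H unfolding aleph_space_def by simp
  show "metrizable_space (euclidean :: 'a topology)"
    by (rule base_to_metrizable[OF t1, of B]) (use B in blast)+
qed

end
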